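(* Let $m\geq 0$ and $k\geq 1$ be integers and let $n$ be a nonnegative integer with $n<t(m+1,k)$, where \[ t(s,k)= s\left(\left\lfloor \frac{s}{k}\right\rfloor +1\right)k-\binom{\lfloor s/k\rfloor +1}{2}k^2 . \] Then $b(n,k)\leq m$.
   Context: For a cell $u$ of the Young diagram of a partition $\lambda$, the hook length of $u$ is the number of cells $v$ of the diagram with $v=u$, or $v$ below $u$ in the same column, or $v$ to the right of $u$ in the same row. $\alpha_k(\lambda)$ is the number of cells of the Young diagram of $\lambda$ with hook length exactly $k$. $P(n)$ is the set of partitions of $n$ (with $P(0)$ containing only the empty partition), and $b(n,k)=\max\{\alpha_k(\lambda)\colon\lambda\in P(n)\}$. *)

theory Defs
  imports Main
begin

definition is_partition_of :: "nat \<Rightarrow> nat list \<Rightarrow> bool" where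
  "is_partition_of n lam \<longleftrightarrow> sorted_wrt (\<ge>) lam \<and> 0 \<notin> set lam \<and> sum_list lam = n"

definition partitions_of :: "nat \<Rightarrow> nat list set" where
  "partitions_of n = {lam. is_partition_of n lam}"

text \<open>Young diagram (English convention): cell (i,j) = row i, column j, 0-indexed.\<close>
definition young_diagram :: "nat list \<Rightarrow> (nat \<times> nat) set" where
  "young_diagram lam = {(i, j). i < length lam \<and> j < lam ! i}"

definition hook_length :: "nat list \<Rightarrow> nat \<times> nat \<Rightarrow> nat" where
  "hook_length lam u = card {v \<in> young_diagram lam.
      v = u \<or> (snd v = snd u \<and> fst v > fst u) \<or> (fst v = fst u \<and> snd v > snd u)}"

definition alpha :: "nat \<Rightarrow> nat list \<Rightarrow> nat" where
  "alpha k lam = card {u \<in> young_diagram lam. hook_length lam u = k}"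

definition b :: "nat \<Rightarrow> nat \<Rightarrow> nat" where
  "b n k = Max (alpha k ` partitions_of n)"

definition t :: "nat \<Rightarrow> nat \<Rightarrow> int" where
  "t s k = int s * (int (s div k) + 1) * int k - int ((s div k + 1) choose 2) * (int k)^2"

end

theory Submission
  imports Defs
begin


definition Phi :: "nat \<Rightarrow> nat set \<Rightarrow> nat" where
 "Phi k B = card {(y,x). y < x \<and> x \<in> B \<and> y \<notin> B \<and> y mod k = x mod k}"

definition KP :: "nat \<Rightarrow> nat set \<Rightarrow> nat set" where
 "KP k B = {x \<in> B. k \<le> x \<and> x - k \<notin> B}"

definition Qf :: "nat \<Rightarrow> nat set \<Rightarrow> nat" where
 "Qf k K = card {(a,b). a \<in> K \<and> b \<in> K \<and> a \<le> b \<and> a mod k = b mod k}"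

definition g :: "nat \<Rightarrow> nat \<Rightarrow> nat" where
 "g k s = (\<Sum>i<s. i div k + 1)"

lemma sum_card_le:
  fixes B :: "nat set"
  assumes "finite B" shows "(\<Sum>i<card B. i) \<le> \<Sum>B"
  using assms
proof (induction "card B" arbitrary: B)
  case 0 then show ?case by simp
next
  case (Suc c)
  have fin: "finite B" by fact
  have cB: "card B = Suc c" using Suc.hyps(2) by simp
  then have ne: "B \<noteq> {}" by auto
  define M where "M = Max B"
  have M: "M \<in> B" using fin ne by (simp add: M_def)
  have sub: "B \<subseteq> {..M}" using fin by (simp add: M_def subset_iff)
  have "card B \<le> card {..M}" using card_mono[OF _ sub] by simp
  hence cM: "c \<le> M" using cB by simp
  have c: "c = card (B - {M})" using cB M fin by simp
  have IH: "(\<Sum>i<c. i) \<le> \<Sum>(B - {M})" using Suc.hyps(1)[OF c] fin c by simp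
  have "\<Sum>B = M + \<Sum>(B - {M})" using fin M by (simp add: sum.remove)
  then show ?case using IH cM cB by simp
qed
lemma mod_gap:
  fixes w x k :: nat
  assumes "w mod k = x mod k" "w < x" "k \<ge> 1"
  shows "w + k \<le> x"
proof -
  have "k dvd (x - w)" using assms by (metis mod_eq_dvd_iff_nat less_imp_le)
  then obtain d where "x - w = k * d" by auto
  moreover have "d \<noteq> 0" using assms calculation by (metis diff_is_0_eq leD mult_0_right)
  moreover have "k \<le> k * d" using mult_le_mono2[of 1 d k] \<open>d \<noteq> 0\<close> by simp
  ultimately have "k \<le> x - w" by simp
  then show ?thesis using assms by linarith
qed

lemma Phi_finite:
  fixes B :: "nat set"
  assumes "finite B"
  shows "finite {(y,x). y < x \<and> x \<in> B \<and> y \<notin> B \<and> y mod k = x mod k}"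
proof -
  define N where "N = Suc (Max B)"
  have N: "B \<subseteq> {..<N}" using assms by (auto simp: N_def le_imp_less_Suc)
  have "{(y,x). y < x \<and> x \<in> B \<and> y \<notin> B \<and> y mod k = x mod k} \<subseteq> {..<N} \<times> {..<N}"
    using N by auto
  then show ?thesis using finite_subset by blast
qed

lemma swap_step:
  fixes B :: "nat set"
  assumes fin: "finite B" and k: "k \<ge> 1" and x: "x \<in> B" "k \<le> x" "x - k \<notin> B"
  defines "B' \<equiv> insert (x - k) (B - {x})"
  shows "finite B'" "card B' = card B" "\<Sum>B' + k = \<Sum>B" "Phi k B \<le> Phi k B' + 1"
proof -
  show "finite B'" using fin by (simp add: B'_def)
  have nx: "x - k \<notin> B - {x}" using x by simp
  have c1: "card B' = Suc (card (B - {x}))" using fin nx by (simp add: B'_def)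
  have c2: "card (B - {x}) = card B - 1" using x fin by (simp add: card_Diff_singleton)
  have c3: "card B > 0" using x fin card_gt_0_iff by blast
  show "card B' = card B" using c1 c2 c3 by simp
  have "\<Sum>B' = (x - k) + \<Sum>(B - {x})" using fin x by (simp add: B'_def)
  moreover have "\<Sum>B = x + \<Sum>(B - {x})" using fin x by (simp add: sum.remove)
  ultimately show "\<Sum>B' + k = \<Sum>B" using x by simp
  define \<sigma> where "\<sigma> w = (if w = x then x - k else if w = x - k then x else w)" for w
  have xk: "x - k < x" using k x by simp
  have mem: "\<sigma> w \<in> B' \<longleftrightarrow> w \<in> B" for w
    using x xk by (auto simp: \<sigma>_def B'_def)
  have xmod: "(x - k) mod k = x mod k" using x by (simp add: le_mod_geq)
  have md: "\<sigma> w mod k = w mod k" for w using xmod by (simp add: \<sigma>_def)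
  have sinj: "inj \<sigma>" unfolding inj_def \<sigma>_def using xk by auto
  define S where "S C = {(y,z). y < z \<and> z \<in> C \<and> y \<notin> C \<and> y mod k = z mod k}" for C
  define f where "f = (\<lambda>(y,z). (\<sigma> y, \<sigma> z))"
  have finS: "finite (S B')" unfolding S_def using Phi_finite[OF \<open>finite B'\<close>] by simp
  have sub: "f ` (S B - {(x-k,x)}) \<subseteq> S B'"
  proof
    fix p assume "p \<in> f ` (S B - {(x-k,x)})"
    then obtain y z where p: "p = (\<sigma> y, \<sigma> z)" and yz: "y < z" "z \<in> B" "y \<notin> B" "y mod k = z mod k"
       "(y,z) \<noteq> (x-k,x)" by (auto simp: f_def S_def)
    have ord: "\<sigma> y < \<sigma> z"
    proof -
      have "y \<noteq> x" using yz x by auto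
      moreover have "z \<noteq> x - k" using yz x by auto
      moreover {
        assume a: "y = x - k" "z \<noteq> x"
        have "z mod k = x mod k" using yz a xmod by simp
        have "x < z"
        proof (rule ccontr)
          assume "\<not> x < z"
          then have "z < x" using a by simp
          then have "z + k \<le> x" using mod_gap[OF \<open>z mod k = x mod k\<close> _ k] by simp
          then show False using yz a by simp
        qed
        then have ?thesis using a xk by (simp add: \<sigma>_def)
      }
      moreover {
        assume a: "z = x" "y \<noteq> x - k"
        have "y + k \<le> x" using mod_gap[of y k x] yz a k by simp
        then have "y < x - k" using a by simp
        then have ?thesis using a \<open>y \<noteq> x\<close> by (simp add: \<sigma>_def)
      }
      moreover {
        assume a: "y \<noteq> x - k" "z \<noteq> x"
        then have ?thesis using yz \<open>y \<noteq> x\<close> \<open>z \<noteq> x - k\<close> by (simp add: \<sigma>_def)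
      }
      ultimately show ?thesis using yz(5) by blast
    qed
    show "p \<in> S B'" using ord mem md yz p by (simp add: S_def)
  qed
  have injf: "inj_on f (S B - {(x-k,x)})"
    using sinj unfolding inj_on_def inj_def f_def by auto
  have "card (S B - {(x-k,x)}) \<le> card (S B')"
    using card_inj_on_le[OF injf sub finS] .
  moreover have "card (S B) \<le> card (S B - {(x-k,x)}) + 1"
    by (cases "finite (S B)"; cases "(x-k,x) \<in> S B") (auto simp: card_Diff_singleton_if)
  ultimately show "Phi k B \<le> Phi k B' + 1" by (simp add: Phi_def S_def)
qed



lemma main_ineq:
  fixes B :: "nat set"
  assumes "finite B" "k \<ge> 1"
  shows "(\<Sum>i<card B. i) + k * Phi k B \<le> \<Sum>B"
  using assms
proof (induction "\<Sum>B" arbitrary: B rule: less_induct)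
  case less
  have fin: "finite B" and k: "k \<ge> 1" by fact+
  show ?case
  proof (cases "Phi k B = 0")
    case True then show ?thesis using sum_card_le[OF fin] by simp
  next
    case False
    then have "{(y,x). y < x \<and> x \<in> B \<and> y \<notin> B \<and> y mod k = x mod k} \<noteq> {}"
      unfolding Phi_def by (metis card.empty)
    then obtain y z where yz: "y < z" "z \<in> B" "y \<notin> B" "y mod k = z mod k" by blast
    define P where "P w \<longleftrightarrow> w \<in> B \<and> y < w \<and> w mod k = y mod k" for w
    have Pz: "P z" using yz by (simp add: P_def)
    define x where "x = (LEAST w. P w)"
    have Px: "P x" using LeastI[of P z] Pz by (simp add: x_def)
    have xmin: "\<And>w. P w \<Longrightarrow> x \<le> w" using Least_le[of P] by (simp add: x_def)
    have xB: "x \<in> B" and yx: "y < x" and xm: "x mod k = y mod k" using Px by (auto simp: P_def)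
    have gap: "y + k \<le> x" using mod_gap[of y k x] xm yx k by simp
    then have kx: "k \<le> x" by simp
    have xkB: "x - k \<notin> B"
    proof
      assume a: "x - k \<in> B"
      have "x - k \<noteq> y" using a yz by auto
      then have "y < x - k" using gap by simp
      moreover have "(x - k) mod k = y mod k" using xm kx by (simp add: le_mod_geq)
      ultimately have "P (x - k)" using a by (simp add: P_def)
      then have "x \<le> x - k" using xmin by blast
      then show False using k kx yx by simp
    qed
    define B' where "B' = insert (x - k) (B - {x})"
    note sw = swap_step[OF fin k xB kx xkB, folded B'_def]
    have lt: "\<Sum>B' < \<Sum>B" using sw(3) k by simp
    have IH: "(\<Sum>i<card B'. i) + k * Phi k B' \<le> \<Sum>B'"
      using less.hyps[OF lt sw(1) k] .
    have "k * Phi k B \<le> k * Phi k B' + k" using sw(4) mult_le_mono2[of "Phi k B" "Phi k B' + 1" k] by simp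
    then show ?thesis using IH sw(2) sw(3) by simp
  qed
qed

lemma Phi_ge_Q:
  fixes B :: "nat set"
  assumes fin: "finite B" and k: "k \<ge> 1"
  shows "Qf k (KP k B) \<le> Phi k B"
proof -
  define f where "f = (\<lambda>(a::nat,b::nat). (a - k, b))"
  let ?Q = "{(a,b). a \<in> KP k B \<and> b \<in> KP k B \<and> a \<le> b \<and> a mod k = b mod k}"
  let ?S = "{(y,x). y < x \<and> x \<in> B \<and> y \<notin> B \<and> y mod k = x mod k}"
  have inj: "inj_on f ?Q" unfolding inj_on_def f_def KP_def by auto
  have sub: "f ` ?Q \<subseteq> ?S"
  proof
    fix p assume "p \<in> f ` ?Q"
    then obtain a b where p: "p = (a - k, b)" and ab: "a \<in> B" "k \<le> a" "a - k \<notin> B" "b \<in> B" "a \<le> b"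
       "a mod k = b mod k" by (auto simp: f_def KP_def)
    have "(a - k) mod k = a mod k" using ab by (simp add: le_mod_geq)
    then show "p \<in> ?S" using p ab k by auto
  qed
  show ?thesis unfolding Qf_def Phi_def using card_inj_on_le[OF inj sub Phi_finite[OF fin]] .
qed

lemma Q_ge_g:
  fixes K :: "nat set"
  assumes "finite K" "k \<ge> 1"
  shows "g k (card K) \<le> Qf k K"
  using assms
proof (induction "card K" arbitrary: K)
  case 0 then show ?case by (simp add: g_def)
next
  case (Suc s)
  have fin: "finite K" and k: "k \<ge> 1" by fact+
  have cK: "card K = Suc s" using Suc.hyps(2) by simp
  define C where "C r = {a \<in> K. a mod k = r}" for r
  have "\<exists>r<k. s div k + 1 \<le> card (C r)"
  proof (rule ccontr)
    assume "\<not> ?thesis"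
    then have le: "\<And>r. r < k \<Longrightarrow> card (C r) \<le> s div k" by force
    have "K = (\<Union>r\<in>{..<k}. C r)" using k by (auto simp: C_def)
    then have "card K \<le> (\<Sum>r<k. card (C r))" using card_UN_le[of "{..<k}" C] by simp
    also have "\<dots> \<le> (\<Sum>r<k. s div k)" using le by (intro sum_mono) simp
    also have "\<dots> = k * (s div k)" by simp
    also have "\<dots> \<le> s" by simp
    finally show False using cK by simp
  qed
  then obtain r where r: "r < k" "s div k + 1 \<le> card (C r)" by blast
  have finC: "finite (C r)" using fin by (simp add: C_def)
  have neC: "C r \<noteq> {}" using r by auto
  define e where "e = Max (C r)"
  have eC: "e \<in> C r" using finC neC by (simp add: e_def)
  have emax: "\<And>a. a \<in> C r \<Longrightarrow> a \<le> e" using finC by (simp add: e_def)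
  have eK: "e \<in> K" using eC by (simp add: C_def)
  define K' where "K' = K - {e}"
  have cK': "s = card K'" using cK eK fin by (simp add: K'_def)
  have finK': "finite K'" using fin by (simp add: K'_def)
  have IH: "g k s \<le> Qf k K'" using Suc.hyps(1)[OF cK' finK' k] cK' by simp
  let ?SK = "{(a,b). a \<in> K \<and> b \<in> K \<and> a \<le> b \<and> a mod k = b mod k}"
  let ?SK' = "{(a,b). a \<in> K' \<and> b \<in> K' \<and> a \<le> b \<and> a mod k = b mod k}"
  have sub: "?SK' \<union> (\<lambda>a. (a, e)) ` C r \<subseteq> ?SK"
    using emax eC by (auto simp: K'_def C_def)
  have disj: "?SK' \<inter> (\<lambda>a. (a, e)) ` C r = {}" by (auto simp: K'_def)
  have finSK: "finite ?SK"
    by (rule finite_subset[of _ "K \<times> K"]) (use fin in auto)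
  have finSK': "finite ?SK'"
    by (rule finite_subset[of _ "K' \<times> K'"]) (use finK' in auto)
  have "card ?SK' + card (C r) = card (?SK' \<union> (\<lambda>a. (a, e)) ` C r)"
    using card_Un_disjoint[OF finSK' _ disj] finC card_image[of "\<lambda>a. (a, e)" "C r"]
    by (simp add: inj_on_def)
  also have "\<dots> \<le> card ?SK" using card_mono[OF finSK sub] .
  finally have "Qf k K' + card (C r) \<le> Qf k K" by (simp add: Qf_def)
  moreover have "g k (Suc s) = g k s + s div k + 1" by (simp add: g_def)
  ultimately show ?case using IH r cK by simp
qed


lemma g_closed:
  assumes k: "k \<ge> 1"
  shows "g k s + k * ((s div k + 1) choose 2) = s * (s div k + 1)"
proof (induction s)
  case 0 then show ?case by (simp add: g_def)
next
  case (Suc s)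
  define q where "q = s div k"
  have IH: "g k s + k * (Suc q choose 2) = s * Suc q" using Suc.IH by (simp add: q_def)
  have gs: "g k (Suc s) = g k s + Suc q" by (simp add: g_def q_def)
  show ?case
  proof (cases "Suc s mod k = 0")
    case True
    then have d: "Suc s div k = Suc q" by (simp add: div_Suc q_def)
    have "Suc s div k * k + Suc s mod k = Suc s" by (rule div_mult_mod_eq)
    then have sk: "Suc s = Suc q * k" using True d by simp
    have ch: "Suc (Suc q) choose 2 = Suc q + (Suc q choose 2)"
      by (simp add: numeral_2_eq_2)
    have "g k (Suc s) + k * ((Suc s div k + 1) choose 2)
        = (g k s + k * (Suc q choose 2)) + Suc q + k * Suc q"
      using gs d ch by (simp add: add_mult_distrib2)
    also have "\<dots> = s * Suc q + Suc q + Suc q * k" using IH by simp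
    also have "\<dots> = Suc s * Suc q + Suc q * k" by simp
    also have "\<dots> = Suc s * Suc q + Suc s" by (simp only: sk)
    also have "\<dots> = Suc s * (Suc s div k + 1)" using d by simp
    finally show ?thesis .
  next
    case False
    then have d: "Suc s div k = q" by (simp add: div_Suc q_def)
    show ?thesis using gs d IH by simp
  qed
qed

lemma t_eq:
  assumes "k \<ge> 1"
  shows "t s k = int k * int (g k s)"
proof -
  have e: "int (g k s) + int k * int ((s div k + 1) choose 2) = int s * (int (s div k) + 1)"
    using arg_cong[OF g_closed[OF assms, of s], of int] by (simp add: distrib_left)
  have "t s k = int k * (int s * (int (s div k) + 1)) - int k * (int k * int ((s div k + 1) choose 2))"
    unfolding t_def by (simp add: power2_eq_square mult.commute mult.left_commute)
  also have "\<dots> = int k * (int s * (int (s div k) + 1) - int k * int ((s div k + 1) choose 2))"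
    by (simp add: right_diff_distrib)
  also have "\<dots> = int k * int (g k s)" using e by simp
  finally show ?thesis .
qed

lemma g_mono: "u \<le> v \<Longrightarrow> g k u \<le> g k v"
  unfolding g_def by (rule sum_mono2) auto


definition col :: "nat list \<Rightarrow> nat \<Rightarrow> nat set" where
  "col lam j = {i. i < length lam \<and> j < lam ! i}"

definition bt :: "nat list \<Rightarrow> nat \<Rightarrow> nat" where
  "bt lam i = lam ! i + (length lam - 1 - i)"

definition Bset :: "nat list \<Rightarrow> nat set" where
  "Bset lam = bt lam ` {..<length lam}"

lemma downclosed:
  fixes S :: "nat set"
  assumes fin: "finite S" and dc: "\<And>x y. x \<in> S \<Longrightarrow> y \<le> x \<Longrightarrow> y \<in> S"
  shows "S = {..<card S}"
proof -
  have "S \<subseteq> {..<card S}"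
  proof
    fix x assume x: "x \<in> S"
    have "{..x} \<subseteq> S" using dc x by auto
    then have "card {..x} \<le> card S" using card_mono fin by blast
    then show "x \<in> {..<card S}" by simp
  qed
  then show ?thesis using card_subset_eq[of "{..<card S}" S] by simp
qed

lemma srt:
  fixes lam :: "nat list"
  assumes "sorted_wrt (\<ge>) lam" "i \<le> i'" "i' < length lam"
  shows "lam ! i' \<le> lam ! i"
  using assms by (cases "i = i'") (auto simp: sorted_wrt_iff_nth_less)

lemma col_eq:
  assumes "sorted_wrt (\<ge>) lam"
  shows "col lam j = {..<card (col lam j)}"
proof (rule downclosed)
  show "finite (col lam j)" unfolding col_def by simp
  fix x y assume "x \<in> col lam j" "y \<le> x"
  then show "y \<in> col lam j" using srt[OF assms, of y x] by (auto simp: col_def)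
qed

lemma col_le: "card (col lam j) \<le> length lam"
proof -
  have "col lam j \<subseteq> {..<length lam}" by (auto simp: col_def)
  then show ?thesis using card_mono[of "{..<length lam}"] by fastforce
qed

lemma hook_formula:
  assumes s: "sorted_wrt (\<ge>) lam" and ij: "i < length lam" "j < lam ! i"
  shows "hook_length lam (i,j) + i + j + 1 = card (col lam j) + lam ! i"
proof -
  define c where "c = card (col lam j)"
  have ce: "\<And>a. a < length lam \<and> j < lam ! a \<longleftrightarrow> a < c"
    using col_eq[OF s, of j] unfolding c_def[symmetric]
    by (metis (no_types, lifting) col_def lessThan_iff mem_Collect_eq)
  have ic: "i < c" using ce ij by blast
  define H where "H = {v \<in> young_diagram lam.
      v = (i,j) \<or> (snd v = snd (i,j) \<and> fst v > fst (i,j)) \<or> (fst v = fst (i,j) \<and> snd v > snd (i,j))}"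
  define U1 where "U1 = (\<lambda>a. (a,j)) ` {i<..<c}"
  define U2 where "U2 = (\<lambda>b. (i,b)) ` {j<..<lam ! i}"
  have HE: "H = insert (i,j) (U1 \<union> U2)"
  proof (rule set_eqI)
    fix v :: "nat \<times> nat"
    obtain a bb where v: "v = (a,bb)" by fastforce
    show "v \<in> H \<longleftrightarrow> v \<in> insert (i,j) (U1 \<union> U2)"
      using ce[of a] ij ic unfolding v H_def U1_def U2_def young_diagram_def by auto
  qed
  have c1: "card U1 = c - Suc i" unfolding U1_def by (simp add: card_image inj_on_def)
  have c2: "card U2 = lam ! i - Suc j" unfolding U2_def by (simp add: card_image inj_on_def)
  have dj: "U1 \<inter> U2 = {}" unfolding U1_def U2_def by auto
  have nin: "(i,j) \<notin> U1 \<union> U2" unfolding U1_def U2_def by auto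
  have "card H = Suc (card U1 + card U2)"
    unfolding HE using nin dj by (simp add: card_Un_disjoint U1_def U2_def)
  then have "hook_length lam (i,j) = Suc (c - Suc i + (lam ! i - Suc j))"
    using c1 c2 by (simp add: hook_length_def H_def)
  then show ?thesis using ic ij by (simp add: c_def)
qed

lemma bt_strict:
  assumes s: "sorted_wrt (\<ge>) lam" and "i < i'" "i' < length lam"
  shows "bt lam i' < bt lam i"
  using srt[OF s, of i i'] assms by (simp add: bt_def)

lemma bt_inj:
  assumes s: "sorted_wrt (\<ge>) lam"
  shows "inj_on (bt lam) {..<length lam}"
proof (rule inj_onI)
  fix x y assume "x \<in> {..<length lam}" "y \<in> {..<length lam}" "bt lam x = bt lam y"
  then show "x = y" using bt_strict[OF s, of x y] bt_strict[OF s, of y x]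
    by (metis lessThan_iff nat_neq_iff less_irrefl)
qed

lemma Bset_card:
  assumes s: "sorted_wrt (\<ge>) lam"
  shows "card (Bset lam) = length lam"
  unfolding Bset_def using card_image[OF bt_inj[OF s]] by simp

lemma Bset_sum:
  assumes s: "sorted_wrt (\<ge>) lam"
  shows "\<Sum>(Bset lam) = sum_list lam + (\<Sum>i<length lam. i)"
proof -
  have "\<Sum>(Bset lam) = (\<Sum>i<length lam. bt lam i)"
    unfolding Bset_def using sum.reindex[OF bt_inj[OF s], of id] by simp
  also have "\<dots> = (\<Sum>i<length lam. lam ! i) + (\<Sum>i<length lam. length lam - 1 - i)"
    unfolding bt_def by (rule sum.distrib)
  also have "(\<Sum>i<length lam. length lam - 1 - i) = (\<Sum>i<length lam. i)"
    using sum.nat_diff_reindex[of "\<lambda>i. i" "length lam"] by simp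
  also have "(\<Sum>i<length lam. lam ! i) = sum_list lam"
    by (simp add: sum_list_sum_nth atLeast0LessThan)
  finally show ?thesis .
qed



lemma col_mem:
  assumes s: "sorted_wrt (\<ge>) lam"
  shows "a < length lam \<and> j < lam ! a \<longleftrightarrow> a < card (col lam j)"
  using col_eq[OF s, of j] by (metis (no_types, lifting) col_def lessThan_iff mem_Collect_eq)

lemma alpha_le:
  assumes s: "sorted_wrt (\<ge>) lam" and k: "k \<ge> 1"
  shows "alpha k lam \<le> card (KP k (Bset lam))"
proof -
  let ?A = "{u \<in> young_diagram lam. hook_length lam u = k}"
  define f where "f = (\<lambda>u::nat\<times>nat. bt lam (fst u))"
  have key: "\<And>i j. (i,j) \<in> ?A \<Longrightarrow> i < length lam \<and> j < lam ! i \<and> k + i + j + 1 = card (col lam j) + lam ! i"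
    using hook_formula[OF s] by (auto simp: young_diagram_def)
  have sub: "f ` ?A \<subseteq> KP k (Bset lam)"
  proof
    fix v assume "v \<in> f ` ?A"
    then obtain i j where ij: "(i,j) \<in> ?A" and v: "v = bt lam i" by (auto simp: f_def)
    note kk = key[OF ij]
    define c where "c = card (col lam j)"
    have cl: "c \<le> length lam" using col_le by (simp add: c_def)
    have vB: "v \<in> Bset lam" using kk v by (simp add: Bset_def)
    have h1: "i < length lam" and h3: "k + i + j + 1 = c + lam ! i" using kk by (auto simp: c_def)
    have kv: "k \<le> v" using h1 h3 cl v unfolding bt_def by linarith
    have vk: "v - k = length lam + j - c" using h1 h3 cl v unfolding bt_def by linarith
    have "v - k \<notin> Bset lam"
    proof
      assume "v - k \<in> Bset lam"
      then obtain i' where i': "i' < length lam" "bt lam i' = length lam + j - c"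
        using vk by (auto simp: Bset_def)
      then have eq: "lam ! i' + c = 1 + i' + j" using cl by (simp add: bt_def)
      show False
      proof (cases "i' < c")
        case True
        then have "j < lam ! i'" using col_mem[OF s, of i' j] by (simp add: c_def)
        then show False using eq True by simp
      next
        case False
        then have "\<not> j < lam ! i'" using col_mem[OF s, of i' j] i' by (simp add: c_def)
        then show False using eq False by simp
      qed
    qed
    then show "v \<in> KP k (Bset lam)" using vB kv by (simp add: KP_def)
  qed
  have inj: "inj_on f ?A"
  proof (rule inj_onI)
    fix u1 u2 assume u1: "u1 \<in> ?A" and u2: "u2 \<in> ?A" and e: "f u1 = f u2"
    obtain i1 j1 where p1: "u1 = (i1,j1)" by fastforce
    obtain i2 j2 where p2: "u2 = (i2,j2)" by fastforce
    note k1 = key[OF u1[unfolded p1]] and k2 = key[OF u2[unfolded p2]]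
    have "i1 = i2" using e bt_inj[OF s] k1 k2 p1 p2 by (auto simp: f_def inj_on_def)
    have mono: "\<And>ja jb. ja \<le> jb \<Longrightarrow> card (col lam jb) \<le> card (col lam ja)"
      by (rule card_mono) (auto simp: col_def)
    have "j1 = j2"
    proof (rule ccontr)
      assume "j1 \<noteq> j2"
      then have "j1 < j2 \<or> j2 < j1" by arith
      then show False
      proof
        assume "j1 < j2"
        then show False using mono[of j1 j2] k1 k2 \<open>i1 = i2\<close> by simp
      next
        assume "j2 < j1"
        then show False using mono[of j2 j1] k1 k2 \<open>i1 = i2\<close> by simp
      qed
    qed
    then show "u1 = u2" using p1 p2 \<open>i1 = i2\<close> by simp
  qed
  have fin: "finite (KP k (Bset lam))" by (simp add: KP_def Bset_def)
  show ?thesis unfolding alpha_def using card_inj_on_le[OF inj sub fin] .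
qed

lemma part_bound:
  assumes p: "is_partition_of n lam" and k: "k \<ge> 1"
  shows "k * g k (alpha k lam) \<le> n"
proof -
  have s: "sorted_wrt (\<ge>) lam" and sl: "sum_list lam = n" using p by (auto simp: is_partition_of_def)
  define B where "B = Bset lam"
  have finB: "finite B" by (simp add: B_def Bset_def)
  have m: "(\<Sum>i<card B. i) + k * Phi k B \<le> \<Sum>B" using main_ineq[OF finB k] .
  have "\<Sum>B = n + (\<Sum>i<card B. i)" using Bset_sum[OF s] Bset_card[OF s] sl by (simp add: B_def)
  then have "k * Phi k B \<le> n" using m by simp
  moreover have "g k (alpha k lam) \<le> Phi k B"
  proof -
    have "g k (alpha k lam) \<le> g k (card (KP k B))" using g_mono alpha_le[OF s k] by (simp add: B_def)
    also have "\<dots> \<le> Qf k (KP k B)" using Q_ge_g[of "KP k B" k] finB k by (simp add: KP_def)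
    also have "\<dots> \<le> Phi k B" using Phi_ge_Q[OF finB k] .
    finally show ?thesis .
  qed
  ultimately show ?thesis using mult_le_mono2[of "g k (alpha k lam)" "Phi k B" k] le_trans by blast
qed

lemma length_le_sum: "0 \<notin> set (xs :: nat list) \<Longrightarrow> length xs \<le> sum_list xs"
  by (induction xs) (auto simp: Suc_le_eq)

lemma partitions_finite: "finite (partitions_of n)"
proof -
  have "partitions_of n \<subseteq> {xs. set xs \<subseteq> {..n} \<and> length xs \<le> n}"
  proof
    fix xs assume "xs \<in> partitions_of n"
    then have "0 \<notin> set xs" "sum_list xs = n" by (auto simp: partitions_of_def is_partition_of_def)
    then show "xs \<in> {xs. set xs \<subseteq> {..n} \<and> length xs \<le> n}"
      using length_le_sum[of xs] member_le_sum_list[of _ xs] by auto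
  qed
  then show ?thesis using finite_lists_length_le[of "{..n}" n] finite_subset by blast
qed

lemma partitions_nonempty: "replicate n 1 \<in> partitions_of n"
proof -
  have "sorted_wrt (\<ge>) (replicate n (1::nat))" by (induction n) auto
  then show ?thesis by (auto simp: partitions_of_def is_partition_of_def sum_list_replicate)
qed

theorem corollary3p3:
  fixes m k n :: nat
  assumes "k \<ge> 1"
    and "int n < t (m + 1) k"
  shows "b n k \<le> m"
proof -
  have all: "alpha k lam \<le> m" if "lam \<in> partitions_of n" for lam
  proof (rule ccontr)
    assume "\<not> alpha k lam \<le> m"
    then have "m + 1 \<le> alpha k lam" by simp
    then have "g k (m+1) \<le> g k (alpha k lam)" by (rule g_mono)
    then have "k * g k (m+1) \<le> k * g k (alpha k lam)" by (rule mult_le_mono2)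
    moreover have "k * g k (alpha k lam) \<le> n" using part_bound[of n lam k] that assms(1)
      by (simp add: partitions_of_def)
    ultimately have "k * g k (m+1) \<le> n" by (rule le_trans)
    then have "t (m+1) k \<le> int n" using t_eq[OF assms(1), of "m+1"]
      by (metis of_nat_le_iff of_nat_mult)
    then show False using assms(2) by simp
  qed
  have fin: "finite (alpha k ` partitions_of n)" using partitions_finite by simp
  have ne: "alpha k ` partitions_of n \<noteq> {}" using partitions_nonempty by blast
  show ?thesis unfolding b_def using Max_le_iff[OF fin ne] all by blast
qed


end
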